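(* Let $n$ be a square-free integer with $n\neq 1$ and let $\lambda\geq 3$ be an integer. For integers $s$ with $(s-1)^2>n$ put $\alpha_s=(s^2-s-n,\ (s-1)^2-n,\ s^2-n)\in A(n)$. Then there is $s_0$ such that for all integers $s>t\geq s_0$, the elements $\alpha_s$ and $\alpha_t$ lie in different $H(\lambda)$-orbits of $A(n)$; in fact every element $(a',b',c')$ of the $H(\lambda)$-orbit of $\alpha_s$ satisfies $|a'|\geq s^2-s-n$.
   Context: $A(n)=\{(a,b,c)\in\mathbb{Z}^3: bc=a^2-n\}$, in bijection with $\mathbb{Q}^*(\sqrt n)=\{\frac{a+\sqrt n}{c}: a,c\in\mathbb Z, c\neq 0, \frac{a^2-n}{c}\in\mathbb Z\}$ via $\frac{a+\sqrt n}{c}\mapsto (a,\frac{a^2-n}{c},c)$. $H(\lambda)$ is the group generated by $x:z\mapsto -1/z$ and $w_\lambda:z\mapsto z+\lambda$, acting on triples by $x(a,b,c)=(-a,c,b)$ and $w_\lambda(a,b,c)=(a+\lambda c,\,2\lambda a+b+\lambda^2c,\,c)$. *)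

theory Defs
  imports "HOL-Computational_Algebra.Squarefree"
begin

type_synonym triple = "int \<times> int \<times> int"

definition A :: "int \<Rightarrow> triple set" where
  "A n = {(a, b, c). b * c = a^2 - n}"

text \<open>Action of the generator x : z -> -1/z.\<close>
definition xact :: "triple \<Rightarrow> triple" where
  "xact t = (case t of (a, b, c) \<Rightarrow> (-a, c, b))"

text \<open>Action of the generator w_lambda : z -> z + lambda.\<close>
definition wact :: "int \<Rightarrow> triple \<Rightarrow> triple" where
  "wact l t = (case t of (a, b, c) \<Rightarrow> (a + l * c, 2 * l * a + b + l^2 * c, c))"

definition winvact :: "int \<Rightarrow> triple \<Rightarrow> triple" where
  "winvact l t = wact (-l) t"

text \<open>The orbit of a triple under the group H(lambda) generated by x and w_lambda
  (x is an involution, so closure under x, w_lambda and w_lambda^(-1) gives the group orbit).\<close>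
inductive_set Horbit :: "int \<Rightarrow> triple \<Rightarrow> triple set" for l :: int and t0 :: triple where
  base: "t0 \<in> Horbit l t0"
| x_step: "t \<in> Horbit l t0 \<Longrightarrow> xact t \<in> Horbit l t0"
| w_step: "t \<in> Horbit l t0 \<Longrightarrow> wact l t \<in> Horbit l t0"
| winv_step: "t \<in> Horbit l t0 \<Longrightarrow> winvact l t \<in> Horbit l t0"

definition alpha :: "int \<Rightarrow> int \<Rightarrow> triple" where
  "alpha n s = (s^2 - s - n, (s - 1)^2 - n, s^2 - n)"

end

theory Submission
  imports Defs
begin


lemma L1:
  fixes a b c n :: int
  assumes "b*c = a^2 - n" "\<bar>a\<bar> > \<bar>c\<bar>" "\<bar>a\<bar> > \<bar>n\<bar>"
  shows "\<bar>a\<bar> < \<bar>b\<bar>"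
proof (rule ccontr)
  assume "\<not> \<bar>a\<bar> < \<bar>b\<bar>"
  hence hb: "\<bar>b\<bar> \<le> \<bar>a\<bar>" by simp
  have hc: "\<bar>c\<bar> \<le> \<bar>a\<bar> - 1" using assms(2) by simp
  have "\<bar>b\<bar> * \<bar>c\<bar> \<le> \<bar>a\<bar> * (\<bar>a\<bar> - 1)"
    using hb hc by (intro mult_mono) auto
  hence "\<bar>b*c\<bar> \<le> \<bar>a\<bar>*\<bar>a\<bar> - \<bar>a\<bar>" by (simp add: abs_mult algebra_simps)
  moreover have "\<bar>a\<bar>*\<bar>a\<bar> = a^2" by (simp add: power2_eq_square abs_mult[symmetric])
  ultimately have "\<bar>a^2 - n\<bar> \<le> a^2 - \<bar>a\<bar>" using assms(1) by simp
  thus False using assms(3) by linarith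
qed

lemma absdiv:
  fixes x y c :: int
  assumes "\<bar>x\<bar>*\<bar>c\<bar> > y*\<bar>c\<bar>"
  shows "\<bar>x\<bar> > y"
proof (rule ccontr)
  assume "\<not> \<bar>x\<bar> > y"
  hence "\<bar>x\<bar>*\<bar>c\<bar> \<le> y*\<bar>c\<bar>" by (intro mult_right_mono) auto
  thus False using assms by linarith
qed

lemma L2:
  fixes a c l :: int
  assumes "\<bar>a\<bar> < \<bar>c\<bar>" "l \<ge> 3"
  shows "(a + l*c)*c > 0 \<and> \<bar>a + l*c\<bar> > \<bar>c\<bar> \<and> \<bar>a + l*c\<bar> > \<bar>a\<bar>"
proof -
  have c2: "c*c = \<bar>c\<bar>*\<bar>c\<bar>" by (simp add: abs_mult[symmetric])
  have "\<bar>c\<bar> > 0" using assms(1) by linarith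
  hence "\<bar>a\<bar>*\<bar>c\<bar> < \<bar>c\<bar>*\<bar>c\<bar>" using assms(1) by (intro mult_strict_right_mono) auto
  hence "\<bar>a*c\<bar> < \<bar>c\<bar>*\<bar>c\<bar>" by (simp add: abs_mult)
  hence ac: "a*c > - (\<bar>c\<bar>*\<bar>c\<bar>)" by linarith
  have l3: "l*(c*c) \<ge> 3*(c*c)" using assms(2) by (intro mult_right_mono) auto
  have eq: "(a + l*c)*c = a*c + l*(c*c)" by (simp add: algebra_simps)
  have e: "(a + l*c)*c > 2*(\<bar>c\<bar>*\<bar>c\<bar>)" using ac c2 l3 eq by linarith
  have "\<bar>c\<bar>*\<bar>c\<bar> \<ge> 0" by simp
  hence pos: "(a + l*c)*c > 0" using e by linarith
  have "\<bar>a + l*c\<bar>*\<bar>c\<bar> = (a + l*c)*c" using pos by (simp add: abs_mult[symmetric])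
  hence "\<bar>a + l*c\<bar>*\<bar>c\<bar> > (2*\<bar>c\<bar>)*\<bar>c\<bar>" using e by (simp add: mult.assoc)
  hence "\<bar>a + l*c\<bar> > 2*\<bar>c\<bar>" by (rule absdiv)
  thus ?thesis using pos assms(1) by linarith
qed

lemma L3:
  fixes a c l :: int
  assumes "a*c > 0" "l \<ge> 3"
  shows "(a + l*c)*c > 0 \<and> \<bar>a + l*c\<bar> > \<bar>a\<bar>"
proof -
  have "c \<noteq> 0" using assms(1) by auto
  hence "c*c > 0" by (auto simp: zero_less_mult_iff linorder_neq_iff)
  moreover have "l > 0" using assms(2) by simp
  ultimately have "l*(c*c) > 0" by simp
  moreover have eq: "(a + l*c)*c = a*c + l*(c*c)" by (simp add: algebra_simps)
  ultimately have p: "(a + l*c)*c > a*c" by linarith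
  hence pos: "(a + l*c)*c > 0" using assms(1) by linarith
  have "\<bar>a + l*c\<bar>*\<bar>c\<bar> = (a + l*c)*c" using pos by (simp add: abs_mult[symmetric])
  moreover have "\<bar>a\<bar>*\<bar>c\<bar> = a*c" using assms(1) by (simp add: abs_mult[symmetric])
  ultimately have "\<bar>a + l*c\<bar>*\<bar>c\<bar> > \<bar>a\<bar>*\<bar>c\<bar>" using p by linarith
  hence "\<bar>a + l*c\<bar> > \<bar>a\<bar>" by (rule absdiv)
  thus ?thesis using pos by simp
qed

datatype st = S0 | SX | SP | SM

inductive_set Red :: "int \<Rightarrow> int \<Rightarrow> int \<Rightarrow> (triple \<times> st) set" for n l s where
  r0: "(alpha n s, S0) \<in> Red n l s"
| rx: "(T, q) \<in> Red n l s \<Longrightarrow> q \<noteq> SX \<Longrightarrow> (xact T, SX) \<in> Red n l s"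
| rw: "(T, q) \<in> Red n l s \<Longrightarrow> q \<noteq> SM \<Longrightarrow> (wact l T, SP) \<in> Red n l s"
| rv: "(T, q) \<in> Red n l s \<Longrightarrow> q \<noteq> SP \<Longrightarrow> (winvact l T, SM) \<in> Red n l s"

lemma xx: "xact (xact T) = T"
  by (cases T) (auto simp: xact_def)

lemma wv: "wact l (winvact l T) = T"
  by (cases T) (auto simp: wact_def winvact_def algebra_simps power2_eq_square)

lemma vw: "winvact l (wact l T) = T"
  by (cases T) (auto simp: wact_def winvact_def algebra_simps power2_eq_square)

lemma orbit_Red: "t \<in> Horbit l (alpha n s) \<Longrightarrow> \<exists>q. (t, q) \<in> Red n l s"
proof (induction rule: Horbit.induct)
  case base
  then show ?case using Red.r0 by blast
next
  case (x_step t)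
  then obtain q where q: "(t, q) \<in> Red n l s" by blast
  show ?case
  proof (cases "q = SX")
    case True
    from q[unfolded True] show ?thesis
      by (cases rule: Red.cases) (auto simp: xx)
  next
    case False
    then show ?thesis using q Red.rx by blast
  qed
next
  case (w_step t)
  then obtain q where q: "(t, q) \<in> Red n l s" by blast
  show ?case
  proof (cases "q = SM")
    case True
    from q[unfolded True] show ?thesis
      by (cases rule: Red.cases) (auto simp: wv)
  next
    case False
    then show ?thesis using q Red.rw by blast
  qed
next
  case (winv_step t)
  then obtain q where q: "(t, q) \<in> Red n l s" by blast
  show ?case
  proof (cases "q = SP")
    case True
    from q[unfolded True] show ?thesis
      by (cases rule: Red.cases) (auto simp: vw)
  next
    case False
    then show ?thesis using q Red.rv by blast
  qed
qed

fun inv :: "int \<Rightarrow> int \<Rightarrow> st \<Rightarrow> triple \<Rightarrow> bool" where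
  "inv n s q (a, b, c) = (b*c = a^2 - n \<and>
     (case q of S0 \<Rightarrow> (a, b, c) = alpha n s
      | SX \<Rightarrow> \<bar>a\<bar> \<ge> s^2 - s - n \<and> (\<bar>a\<bar> < \<bar>c\<bar> \<or> (a, b, c) = xact (alpha n s))
      | SP \<Rightarrow> \<bar>a\<bar> \<ge> s^2 - s - n \<and> a*c > 0 \<and> \<bar>a\<bar> > \<bar>c\<bar>
      | SM \<Rightarrow> \<bar>a\<bar> \<ge> s^2 - s - n \<and> a*c < 0 \<and> \<bar>a\<bar> > \<bar>c\<bar>))"

lemma sfacts:
  fixes n s :: int
  assumes "s \<ge> \<bar>n\<bar> + 10"
  shows "s^2 - s - n > \<bar>n\<bar>" "s^2 - s - n \<ge> 3*s - 3" "s > 1"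
proof -
  have "s*s \<ge> 10*s" using assms by (intro mult_right_mono) auto
  moreover have "s^2 = s*s" by (simp add: power2_eq_square)
  ultimately have h: "s^2 \<ge> 10*s" by simp
  have z: "\<bar>n\<bar> \<ge> 0" "n \<le> \<bar>n\<bar>" "-n \<le> \<bar>n\<bar>" by auto
  show "s^2 - s - n > \<bar>n\<bar>" using h z assms by linarith
  show "s^2 - s - n \<ge> 3*s - 3" using h z assms by linarith
  show "s > 1" using h z assms by linarith
qed

lemma alpha_eq: "alpha n s = (s^2 - s - n, (s^2 - s - n) - s + 1, (s^2 - s - n) + s)"
  by (simp add: alpha_def power2_eq_square algebra_simps)

lemma A_w: "(b::int)*c = a^2 - n \<Longrightarrow> (2*l*a + b + l^2*c)*c = (a + l*c)^2 - n"
  by (simp add: algebra_simps power2_eq_square)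

lemma Red_inv:
  assumes "(T, q) \<in> Red n l s" "l \<ge> 3" "s \<ge> \<bar>n\<bar> + 10"
  shows "inv n s q T"
  using assms(1)
proof (induction T q rule: Red.induct)
  case r0
  then show ?case by (simp add: alpha_def power2_eq_square algebra_simps)
next
  case (rx T q)
  obtain a b c where T: "T = (a, b, c)" by (cases T) auto
  have I: "inv n s q (a,b,c)" using rx T by simp
  have sf: "s^2 - s - n > \<bar>n\<bar>" using sfacts[OF assms(3)] by simp
  show ?case
  proof (cases q)
    case S0 
    then have "T = alpha n s" using I T by simp
    then show ?thesis using S0 sf by (simp add: alpha_eq xact_def algebra_simps power2_eq_square)
  next
    case SX then show ?thesis using rx by simp
  next
    case SP
    then have "\<bar>a\<bar> < \<bar>b\<bar>" using I sf by (intro L1[of b c a n]) auto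
    then show ?thesis using I T SP by (auto simp: xact_def algebra_simps)
  next
    case SM
    then have "\<bar>a\<bar> < \<bar>b\<bar>" using I sf by (intro L1[of b c a n]) auto
    then show ?thesis using I T SM by (auto simp: xact_def algebra_simps)
  qed
next
  case (rw T q)
  obtain a b c where T: "T = (a, b, c)" by (cases T) auto
  have I: "inv n s q (a,b,c)" using rw T by simp
  have Ab: "b*c = a^2 - n" using I by simp
  have W: "wact l T = (a + l*c, 2*l*a + b + l^2*c, c)" using T by (simp add: wact_def)
  have AW: "(2*l*a + b + l^2*c)*c = (a + l*c)^2 - n" using A_w[OF Ab] .
  have sf: "s^2 - s - n > \<bar>n\<bar>" "s^2 - s - n \<ge> 3*s - 3" "s > 1" using sfacts[OF assms(3)] by simp_all
  show ?case
  proof (cases q)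
    case S0
    then have E: "a = s^2 - s - n" "c = (s^2 - s - n) + s" using I by (simp_all add: alpha_eq)
    have "l*c \<ge> 3*c" using E sf assms(2) by (intro mult_right_mono) auto
    then show ?thesis using W AW E sf S0 by (simp add: abs_if zero_less_mult_iff)
  next
    case SX
    then have J: "\<bar>a\<bar> \<ge> s^2 - s - n" "\<bar>a\<bar> < \<bar>c\<bar> \<or> (a, b, c) = xact (alpha n s)" using I by simp_all
    show ?thesis
    proof (cases "\<bar>a\<bar> < \<bar>c\<bar>")
      case True
      from L2[OF True assms(2)] show ?thesis using W AW J by auto
    next
      case False
      then have E: "a = -(s^2 - s - n)" "c = (s^2 - s - n) - s + 1" using J by (auto simp: alpha_eq xact_def)
      have "l*c \<ge> 3*c" using E sf assms(2) by (intro mult_right_mono) auto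
      moreover have lin: "\<And>A x y::int. 3*y \<le> x \<Longrightarrow> y = A - s + 1 \<Longrightarrow> 3*s - 3 \<le> A \<Longrightarrow> A \<le> -A + x" by linarith
      ultimately have "a + l*c \<ge> s^2 - s - n" using E sf(2) lin[of c "l*c" "s^2 - s - n"] by simp
      then show ?thesis using W AW E sf by (simp add: zero_less_mult_iff)
    qed
  next
    case SP
    then have J: "\<bar>a\<bar> \<ge> s^2 - s - n" "a*c > 0" "\<bar>a\<bar> > \<bar>c\<bar>" using I by simp_all
    from L3[OF J(2) assms(2)] show ?thesis using W AW J SP by auto
  next
    case SM then show ?thesis using rw by simp
  qed
next
  case (rv T q)
  obtain a b c where T: "T = (a, b, c)" by (cases T) auto
  have I: "inv n s q (a,b,c)" using rv T by simp
  have Ab: "b*c = a^2 - n" using I by simp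
  have W: "winvact l T = (a + (-l)*c, 2*(-l)*a + b + (-l)^2*c, c)" using T by (simp add: wact_def winvact_def)
  have AW: "(2*(-l)*a + b + (-l)^2*c)*c = (a + (-l)*c)^2 - n" using A_w[OF Ab] .
  have sf: "s^2 - s - n > \<bar>n\<bar>" "s^2 - s - n \<ge> 3*s - 3" "s > 1" using sfacts[OF assms(3)] by simp_all
  have neg: "a + (-l)*c = - ((-a) + l*c)" by simp
  show ?case
  proof (cases q)
    case S0
    then have E: "a = s^2 - s - n" "c = (s^2 - s - n) + s" using I by (simp_all add: alpha_eq)
    have "l*c \<ge> 3*c" using E sf assms(2) by (intro mult_right_mono) auto
    moreover have lin: "\<And>A x y::int. 3*y \<le> x \<Longrightarrow> y = A + s \<Longrightarrow> 2*A + 3*s \<le> x - A" by linarith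
    ultimately have "l*c - a \<ge> 2*(s^2 - s - n) + 3*s" using E lin[of c "l*c" "s^2 - s - n"] by simp
    then show ?thesis using W AW E sf S0 by (simp add: zero_less_mult_iff mult_less_0_iff)
  next
    case SX
    then have J: "\<bar>a\<bar> \<ge> s^2 - s - n" "\<bar>a\<bar> < \<bar>c\<bar> \<or> (a, b, c) = xact (alpha n s)" using I by simp_all
    show ?thesis
    proof (cases "\<bar>a\<bar> < \<bar>c\<bar>")
      case True
      then have "\<bar>-a\<bar> < \<bar>c\<bar>" by simp
      from L2[OF this assms(2)] have P: "((-a) + l*c)*c > 0" "\<bar>(-a) + l*c\<bar> > \<bar>c\<bar>" "\<bar>(-a) + l*c\<bar> > \<bar>-a\<bar>" by auto
      have Q: "(a + (-l)*c)*c < 0" "\<bar>a + (-l)*c\<bar> > \<bar>c\<bar>" "\<bar>a + (-l)*c\<bar> > \<bar>a\<bar>"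
        using P unfolding neg by (simp_all only: mult_minus_left neg_less_0_iff_less abs_minus_cancel)
      have R: "\<bar>a + (-l)*c\<bar> \<ge> s^2 - s - n" using Q(3) J(1) by linarith
      show ?thesis unfolding W using AW Q R by simp
    next
      case False
      then have E: "a = -(s^2 - s - n)" "c = (s^2 - s - n) - s + 1" using J by (auto simp: alpha_eq xact_def)
      have "l*c \<ge> 0" using E sf assms(2) by simp
      then show ?thesis using W AW E sf by (simp add: mult_less_0_iff)
    qed
  next
    case SM
    then have J: "\<bar>a\<bar> \<ge> s^2 - s - n" "(-a)*c > 0" "\<bar>a\<bar> > \<bar>c\<bar>" using I by simp_all
    from L3[OF J(2) assms(2)] have P: "((-a) + l*c)*c > 0" "\<bar>(-a) + l*c\<bar> > \<bar>-a\<bar>" by auto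
    have Q: "(a + (-l)*c)*c < 0" "\<bar>a + (-l)*c\<bar> > \<bar>a\<bar>"
      using P unfolding neg by (simp_all only: mult_minus_left neg_less_0_iff_less abs_minus_cancel)
    have R: "\<bar>a + (-l)*c\<bar> \<ge> s^2 - s - n" "\<bar>a + (-l)*c\<bar> > \<bar>c\<bar>" using Q(2) J(1) J(3) by linarith+
    show ?thesis unfolding W SM using AW Q R by simp
  next
    case SP then show ?thesis using rv by simp
  qed
qed


lemma part2:
  assumes "l \<ge> 3" "s \<ge> \<bar>n\<bar> + 10" "(a', b', c') \<in> Horbit l (alpha n s)"
  shows "\<bar>a'\<bar> \<ge> s^2 - s - n"
proof -
  obtain q where q: "((a', b', c'), q) \<in> Red n l s" using orbit_Red[OF assms(3)] by blast
  have "inv n s q (a', b', c')" using Red_inv[OF q assms(1,2)] .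
  then show ?thesis by (cases q) (auto simp: alpha_def)
qed

theorem mainTheorem5:
  fixes n l :: int
  assumes "squarefree n" and "n \<noteq> 1" and "l \<ge> 3"
  shows "\<exists>s0::int.
     (\<forall>s t. s > t \<and> t \<ge> s0 \<and> (t - 1)^2 > n \<and> (s - 1)^2 > n \<longrightarrow>
        Horbit l (alpha n s) \<noteq> Horbit l (alpha n t)) \<and>
     (\<forall>s. s \<ge> s0 \<and> (s - 1)^2 > n \<longrightarrow>
        (\<forall>a' b' c'. (a', b', c') \<in> Horbit l (alpha n s) \<longrightarrow> \<bar>a'\<bar> \<ge> s^2 - s - n))"
proof (intro exI[of _ "\<bar>n\<bar> + 10"] conjI allI impI)
  fix s a' b' c'
  assume "\<bar>n\<bar> + 10 \<le> s \<and> n < (s - 1)\<^sup>2" "(a', b', c') \<in> Horbit l (alpha n s)"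
  then show "s^2 - s - n \<le> \<bar>a'\<bar>" using part2[OF assms(3)] by blast
next
  fix s t
  assume h: "t < s \<and> \<bar>n\<bar> + 10 \<le> t \<and> n < (t - 1)\<^sup>2 \<and> n < (s - 1)\<^sup>2"
  show "Horbit l (alpha n s) \<noteq> Horbit l (alpha n t)"
  proof
    assume eq: "Horbit l (alpha n s) = Horbit l (alpha n t)"
    have "alpha n t \<in> Horbit l (alpha n s)" using eq Horbit.base by simp
    then have m: "(t^2 - t - n, (t - 1)^2 - n, t^2 - n) \<in> Horbit l (alpha n s)" by (simp add: alpha_def)
    have hs: "s \<ge> \<bar>n\<bar> + 10" using h by linarith
    have "\<bar>t^2 - t - n\<bar> \<ge> s^2 - s - n" using part2[OF assms(3) hs m] .
    moreover have "t^2 - t - n > \<bar>n\<bar>" using sfacts(1)[of n t] h by linarith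
    moreover have "(s - t)*(s + t - 1) > 0" using h by (intro mult_pos_pos) auto
    moreover have "(s - t)*(s + t - 1) = (s^2 - s) - (t^2 - t)" by (simp add: algebra_simps power2_eq_square)
    ultimately show False by linarith
  qed
qed

end
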